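(* Let $N\ge 1$, let $\varepsilon_0,\dots,\varepsilon_N$ be real constants with $\varepsilon_N=0$, let $u_0,\dots,u_N$ be smooth functions of $x$, and set $J_i=\frac14\varepsilon_i\partial^3+\frac12(u_i\partial+\partial u_i)$ for $i=0,\dots,N$. Assume $J_0$ is invertible. Let $B_0$, $R$, $B_s=R^sB_0$ and $\Omega_s=(R^\dagger)^s\Omega_0$ (with $\Omega_0=B_0^{-1}$) be the $N\times N$ matrix operators described in the context. Then for every $s\in\mathbf{Z}$, \[ B_s\,\Omega_{-s}=I_N , \] where $I_N$ is the $N\times N$ identity.
   Context: Here $\partial=\partial/\partial x$ and $\partial^{-1}$ is a formal inverse of $\partial$ ($\partial\partial^{-1}=\partial^{-1}\partial=1$); all operators are (matrix) pseudo-differential operators in $\partial$ with coefficients depending on $x$. Since $\varepsilon_N=0$, $J_N=u_N^{1/2}\partial u_N^{1/2}$ is invertible with $J_N^{-1}=u_N^{-1/2}\partial^{-1}u_N^{-1/2}$. The formal adjoint $\dagger$ satisfies $\partial^\dagger=-\partial$, multiplication operators are self-adjoint, $(AB)^\dagger=B^\dagger A^\dagger$, and for matrix operators one transposes and takes adjoints entrywise; in particular $J_i^\dagger=-J_i$. The operator $B_0$ is the $N\times N$ matrix with entries $(B_0)_{ij}=-J_{i+j-1}$ if $i+j-1\le N$ and $(B_0)_{ij}=0$ otherwise ($1\le i,j\le N$); it is invertible and $\Omega_0:=B_0^{-1}$. The operator $R$ is the $N\times N$ matrix with $R_{ij}=\delta_{i,j+1}$ for $1\le j\le N-1$ and $R_{iN}=-J_{i-1}J_N^{-1}$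 for $1\le i\le N$. Since $J_0$ is invertible, $R$ is invertible, and $B_s:=R^sB_0$, $\Omega_s:=(R^\dagger)^s\Omega_0$ for all $s\in\mathbf Z$. *)

theory Defs
  imports "HOL-Analysis.Analysis"
begin

definition smooth :: "(real \<Rightarrow> real) \<Rightarrow> bool" where
  "smooth f \<longleftrightarrow> (\<forall>k x. ((deriv ^^ k) f) differentiable (at x))"

text \<open>An algebra of (formal) pseudo-differential operators in D = d/dx with smooth
  coefficients: D is invertible, mop f is the multiplication operator by f
  (a ring homomorphism from functions), Leibniz rule, and the formal adjoint adj
  (real-linear anti-involution with adj D = - D and multiplication operators self-adjoint).\<close>
definition psido_algebra ::
  "'a::real_algebra_1 \<Rightarrow> ((real \<Rightarrow> real) \<Rightarrow> 'a) \<Rightarrow> ('a \<Rightarrow> 'a) \<Rightarrow> bool" where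
  "psido_algebra D mop adj \<longleftrightarrow>
     (\<exists>Di. D * Di = 1 \<and> Di * D = 1) \<and>
     (\<forall>f g. smooth f \<longrightarrow> smooth g \<longrightarrow> mop (\<lambda>x. f x + g x) = mop f + mop g) \<and>
     (\<forall>f g. smooth f \<longrightarrow> smooth g \<longrightarrow> mop (\<lambda>x. f x * g x) = mop f * mop g) \<and>
     (\<forall>c. mop (\<lambda>x. c) = of_real c) \<and>
     (\<forall>f. smooth f \<longrightarrow> D * mop f = mop f * D + mop (deriv f)) \<and>
     (\<forall>a b. adj (a + b) = adj a + adj b) \<and>
     (\<forall>c a. adj (c *\<^sub>R a) = c *\<^sub>R adj a) \<and>
     (\<forall>a b. adj (a * b) = adj b * adj a) \<and>
     (\<forall>a. adj (adj a) = a) \<and>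
     adj 1 = 1 \<and>
     adj D = - D \<and>
     (\<forall>f. smooth f \<longrightarrow> adj (mop f) = mop f)"

definition invertible_el :: "'a::ring_1 \<Rightarrow> bool" where
  "invertible_el a \<longleftrightarrow> (\<exists>b. a * b = 1 \<and> b * a = 1)"

definition rinv :: "'a::ring_1 \<Rightarrow> 'a" where
  "rinv a = (SOME b. a * b = 1 \<and> b * a = 1)"

definition Jop :: "'a::real_algebra_1 \<Rightarrow> ((real \<Rightarrow> real) \<Rightarrow> 'a) \<Rightarrow> (nat \<Rightarrow> real)
    \<Rightarrow> (nat \<Rightarrow> real \<Rightarrow> real) \<Rightarrow> nat \<Rightarrow> 'a" where
  "Jop D mop eps u i = (eps i / 4) *\<^sub>R D ^ 3 + (1/2) *\<^sub>R (mop (u i) * D + D * mop (u i))"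

text \<open>N x N matrices of operators, indices 1..N (entries outside are ignored).\<close>
type_synonym 'a mat = "nat \<Rightarrow> nat \<Rightarrow> 'a"

definition mmul :: "nat \<Rightarrow> 'a::ring_1 mat \<Rightarrow> 'a mat \<Rightarrow> 'a mat" where
  "mmul N A B = (\<lambda>i j. \<Sum>k=1..N. A i k * B k j)"

definition mone :: "'a::ring_1 mat" where
  "mone = (\<lambda>i j. if i = j then 1 else 0)"

definition meq :: "nat \<Rightarrow> 'a mat \<Rightarrow> 'a mat \<Rightarrow> bool" where
  "meq N A B \<longleftrightarrow> (\<forall>i\<in>{1..N}. \<forall>j\<in>{1..N}. A i j = B i j)"

definition minv :: "nat \<Rightarrow> 'a::ring_1 mat \<Rightarrow> 'a mat" where
  "minv N A = (SOME B. meq N (mmul N A B) mone \<and> meq N (mmul N B A) mone)"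

definition mpow_nat :: "nat \<Rightarrow> 'a::ring_1 mat \<Rightarrow> nat \<Rightarrow> 'a mat" where
  "mpow_nat N A n = ((mmul N A) ^^ n) mone"

definition mpow :: "nat \<Rightarrow> 'a::ring_1 mat \<Rightarrow> int \<Rightarrow> 'a mat" where
  "mpow N A s = (if 0 \<le> s then mpow_nat N A (nat s) else mpow_nat N (minv N A) (nat (- s)))"

definition madj :: "('a \<Rightarrow> 'a) \<Rightarrow> 'a mat \<Rightarrow> 'a mat" where
  "madj adj A = (\<lambda>i j. adj (A j i))"

definition B0 :: "nat \<Rightarrow> (nat \<Rightarrow> 'a::ring_1) \<Rightarrow> 'a mat" where
  "B0 N J = (\<lambda>i j. if i + j - 1 \<le> N then - J (i + j - 1) else 0)"

definition Rmat :: "nat \<Rightarrow> (nat \<Rightarrow> 'a::ring_1) \<Rightarrow> 'a mat" where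
  "Rmat N J = (\<lambda>i j. if j = N then - (J (i - 1) * rinv (J N))
                      else if i = j + 1 then 1 else 0)"

definition Bs :: "nat \<Rightarrow> (nat \<Rightarrow> 'a::ring_1) \<Rightarrow> int \<Rightarrow> 'a mat" where
  "Bs N J s = mmul N (mpow N (Rmat N J) s) (B0 N J)"

definition Omegas :: "nat \<Rightarrow> ('a \<Rightarrow> 'a) \<Rightarrow> (nat \<Rightarrow> 'a::ring_1) \<Rightarrow> int \<Rightarrow> 'a mat" where
  "Omegas N adj J s = mmul N (mpow N (madj adj (Rmat N J)) s) (minv N (B0 N J))"

end

theory Submission
  imports Defs
begin


lemma smooth_coind:
  assumes "P f" "\<And>g x. P g \<Longrightarrow> g differentiable (at x)" "\<And>g. P g \<Longrightarrow> P (deriv g)"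
  shows "smooth f"
proof -
  have "\<forall>g. P g \<longrightarrow> ((deriv ^^ k) g) differentiable (at x)" for k x
  proof (induction k)
    case 0 then show ?case using assms(2) by simp
  next
    case (Suc k)
    then show ?case using assms(3) by (simp add: funpow_Suc_right del: funpow.simps)
  qed
  then show ?thesis using assms(1) unfolding smooth_def by blast
qed

lemma smooth_diff: "smooth f \<Longrightarrow> f differentiable (at x)"
  unfolding smooth_def by (metis funpow_0)

lemma smooth_deriv: "smooth f \<Longrightarrow> smooth (deriv f)"
  unfolding smooth_def by (metis funpow_Suc_right comp_apply)

lemma smooth_DERIV: "smooth f \<Longrightarrow> DERIV f x :> deriv f x"
  using smooth_diff DERIV_deriv_iff_real_differentiable by blast

lemma smooth_const: "smooth (\<lambda>x. c)"
  by (rule smooth_coind[where P="\<lambda>h. \<exists>c. h = (\<lambda>x. c)"]) auto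

inductive sp :: "(real \<Rightarrow> real) \<Rightarrow> bool" where
  sp_mult: "smooth f \<Longrightarrow> smooth g \<Longrightarrow> sp (\<lambda>x. f x * g x)"
| sp_add: "sp h1 \<Longrightarrow> sp h2 \<Longrightarrow> sp (\<lambda>x. h1 x + h2 x)"

lemma sp_DERIV: "sp h \<Longrightarrow> DERIV h x :> deriv h x"
proof (induction arbitrary: x rule: sp.induct)
  case (sp_mult f g)
  have "DERIV (\<lambda>x. f x * g x) x :> deriv f x * g x + deriv g x * f x"
    using sp_mult by (intro DERIV_mult smooth_DERIV)
  then show ?case using DERIV_imp_deriv by fastforce
next
  case (sp_add h1 h2)
  have "DERIV (\<lambda>x. h1 x + h2 x) x :> deriv h1 x + deriv h2 x"
    using sp_add by (intro DERIV_add)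
  then show ?case using DERIV_imp_deriv by fastforce
qed

lemma sp_deriv: "sp h \<Longrightarrow> sp (deriv h)"
proof (induction rule: sp.induct)
  case (sp_mult f g)
  have "deriv (\<lambda>x. f x * g x) = (\<lambda>x. deriv f x * g x + f x * deriv g x)"
  proof
    fix x
    have "DERIV (\<lambda>x. f x * g x) x :> deriv f x * g x + deriv g x * f x"
      using sp_mult by (intro DERIV_mult smooth_DERIV)
    then show "deriv (\<lambda>x. f x * g x) x = deriv f x * g x + f x * deriv g x" using DERIV_imp_deriv by (simp add: mult.commute)
  qed
  then show ?case using sp_mult sp.sp_add[OF sp.sp_mult sp.sp_mult] by (simp add: smooth_deriv)
next
  case (sp_add h1 h2)
  have "deriv (\<lambda>x. h1 x + h2 x) = (\<lambda>x. deriv h1 x + deriv h2 x)"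
  proof
    fix x
    have "DERIV (\<lambda>x. h1 x + h2 x) x :> deriv h1 x + deriv h2 x"
      using sp_add.hyps by (intro DERIV_add sp_DERIV)
    then show "deriv (\<lambda>x. h1 x + h2 x) x = deriv h1 x + deriv h2 x" by (rule DERIV_imp_deriv)
  qed
  then show ?case using sp_add by (auto intro!: sp.intros)
qed

lemma sp_smooth: "sp h \<Longrightarrow> smooth h"
  by (rule smooth_coind[where P=sp]) (auto intro: sp_deriv simp: DERIV_deriv_iff_real_differentiable[symmetric] sp_DERIV)

lemma smooth_mult: "smooth f \<Longrightarrow> smooth g \<Longrightarrow> smooth (\<lambda>x. f x * g x)"
  by (rule sp_smooth[OF sp.sp_mult])

lemma smooth_add: "smooth f \<Longrightarrow> smooth g \<Longrightarrow> smooth (\<lambda>x. f x + g x)"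
proof -
  assume a: "smooth f" "smooth g"
  show ?thesis using sp_smooth[OF sp.sp_add[OF sp.sp_mult[OF a(1) smooth_const[of 1]] sp.sp_mult[OF a(2) smooth_const[of 1]]]] by simp
qed

lemma smooth_sqrt_class:
  assumes u: "smooth u" and pos: "\<forall>x. u x > 0"
  shows "smooth g \<Longrightarrow> smooth (\<lambda>x. g x / sqrt (u x) ^ k)"
proof -
  let ?P = "\<lambda>h. \<exists>g k. smooth g \<and> h = (\<lambda>x. g x / sqrt (u x) ^ k)"
  have D: "DERIV (\<lambda>x. g x / sqrt (u x) ^ k) x :>
      (deriv g x * u x - (real k / 2) * g x * deriv u x) / sqrt (u x) ^ (k + 2)"
    if g: "smooth g" for g k x
  proof -
    have ux: "u x > 0" using pos by auto
    have s0: "sqrt (u x) > 0" using ux by simp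
    have d1: "DERIV (\<lambda>x. sqrt (u x)) x :> inverse (sqrt (u x)) / 2 * deriv u x"
      using DERIV_chain2[OF DERIV_real_sqrt[OF ux] smooth_DERIV[OF u]] by simp
    have d2: "DERIV (\<lambda>x. sqrt (u x) ^ k) x :> of_nat k * sqrt (u x) ^ (k - 1) * (inverse (sqrt (u x)) / 2 * deriv u x)"
      using DERIV_power[OF d1, of k] by (simp add: algebra_simps)
    have d3: "DERIV (\<lambda>x. g x / sqrt (u x) ^ k) x :>
       (deriv g x * sqrt (u x) ^ k - g x * (of_nat k * sqrt (u x) ^ (k - 1) * (inverse (sqrt (u x)) / 2 * deriv u x))) / (sqrt (u x) ^ k * sqrt (u x) ^ k)"
      by (rule DERIV_divide[OF smooth_DERIV[OF g] d2]) (use s0 in simp)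
    have sq: "sqrt (u x) * sqrt (u x) = u x" using ux by simp
    have e: "(deriv g x * sqrt (u x) ^ k - g x * (of_nat k * sqrt (u x) ^ (k - 1) * (inverse (sqrt (u x)) / 2 * deriv u x))) / (sqrt (u x) ^ k * sqrt (u x) ^ k)
       = (deriv g x * u x - (real k / 2) * g x * deriv u x) / sqrt (u x) ^ (k + 2)"
    proof (cases k)
      case 0 then show ?thesis using sq s0 by (simp add: field_simps)
    next
      case (Suc j)
      then show ?thesis using sq s0 by (simp add: field_simps power_add)
    qed
    show ?thesis using d3 e by simp
  qed
  show "smooth g \<Longrightarrow> smooth (\<lambda>x. g x / sqrt (u x) ^ k)"
  proof (rule smooth_coind[where P="?P"])
    assume "smooth g" then show "?P (\<lambda>x. g x / sqrt (u x) ^ k)" by blast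
  next
    fix h x assume "?P h"
    then obtain g k where "smooth g" "h = (\<lambda>x. g x / sqrt (u x) ^ k)" by blast
    then show "h differentiable (at x)" using D real_differentiable_def by blast
  next
    fix h assume "?P h"
    then obtain g k where g: "smooth g" and h: "h = (\<lambda>x. g x / sqrt (u x) ^ k)" by blast
    have "deriv h = (\<lambda>x. (\<lambda>x. deriv g x * u x + (- (real k / 2)) * (g x * deriv u x)) x / sqrt (u x) ^ (k + 2))"
      using D[OF g] DERIV_imp_deriv unfolding h by (fastforce simp: algebra_simps)
    moreover have "smooth (\<lambda>x. deriv g x * u x + (- (real k / 2)) * (g x * deriv u x))"
      using g u by (intro smooth_add smooth_mult smooth_deriv smooth_const)
    ultimately show "?P (deriv h)" by blast
  qed
qed



lemma mmul_assoc: "mmul N (mmul N A B) C = mmul N A (mmul N B C)"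
  unfolding mmul_def
proof (intro ext)
  fix i j
  show "(\<Sum>k = 1..N. (\<Sum>l = 1..N. A i l * B l k) * C k j) = (\<Sum>k = 1..N. A i k * (\<Sum>l = 1..N. B k l * C l j))"
    by (simp add: sum_distrib_left sum_distrib_right mult.assoc) (rule sum.swap)
qed

lemma meq_refl[simp]: "meq N A A" by (simp add: meq_def)
lemma meq_sym: "meq N A B \<Longrightarrow> meq N B A" by (simp add: meq_def)
lemma meq_trans[trans]: "meq N A B \<Longrightarrow> meq N B C \<Longrightarrow> meq N A C" by (simp add: meq_def)

lemma meq_mmul_left: "meq N A A' \<Longrightarrow> meq N (mmul N A B) (mmul N A' B)"
  unfolding meq_def mmul_def by simp
lemma meq_mmul_right: "meq N B B' \<Longrightarrow> meq N (mmul N A B) (mmul N A B')"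
  unfolding meq_def mmul_def by (auto intro!: sum.cong)
lemma meq_mmul: "meq N A A' \<Longrightarrow> meq N B B' \<Longrightarrow> meq N (mmul N A B) (mmul N A' B')"
  by (meson meq_mmul_left meq_mmul_right meq_trans)

lemma mmul_one_left: "meq N (mmul N mone A) A"
proof -
  have "(\<Sum>k=1..N. (if i = k then 1 else 0) * A k j) = A i j" if "i \<in> {1..N}" for i j
    using that by (simp add: if_distrib[of "\<lambda>x. x * _"] cong: if_cong)
  then show ?thesis unfolding meq_def mmul_def mone_def by blast
qed
lemma mmul_one_right: "meq N (mmul N A mone) A"
proof -
  have "(\<Sum>k=1..N. A i k * (if k = j then 1 else 0)) = A i j" if "j \<in> {1..N}" for i j
    using that by (simp add: if_distrib[of "\<lambda>x. _ * x"] cong: if_cong)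
  then show ?thesis unfolding meq_def mmul_def mone_def by blast
qed

lemma mpow_Suc: "mpow_nat N A (Suc n) = mmul N A (mpow_nat N A n)"
  by (simp add: mpow_nat_def)
lemma mpow_0: "mpow_nat N A 0 = mone"
  by (simp add: mpow_nat_def)
lemma mpow_Suc': "meq N (mpow_nat N A (Suc n)) (mmul N (mpow_nat N A n) A)"
proof (induction n)
  case 0 show ?case by (simp add: mpow_Suc mpow_0) (meson meq_sym meq_trans mmul_one_left mmul_one_right)
next
  case (Suc n)
  have "meq N (mpow_nat N A (Suc (Suc n))) (mmul N A (mmul N (mpow_nat N A n) A))"
    unfolding mpow_Suc[of N A "Suc n"] by (rule meq_mmul_right[OF Suc])
  then show ?case by (simp add: mpow_Suc mmul_assoc)
qed

lemma minv_ok: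
  assumes "meq N (mmul N A L) mone" "meq N (mmul N L A) mone"
  shows "meq N (mmul N A (minv N A)) mone \<and> meq N (mmul N (minv N A) A) mone"
  unfolding minv_def by (rule someI[of _ L]) (use assms in blast)

lemma minv_ok2:
  assumes "meq N (mmul N A L) mone" "meq N (mmul N L' A) mone"
  shows "meq N (mmul N A (minv N A)) mone \<and> meq N (mmul N (minv N A) A) mone"
proof (rule minv_ok[OF assms(1)])
  have "meq N L' (mmul N L' (mmul N A L))"
    using meq_mmul_right[OF assms(1), of L'] mmul_one_right meq_sym meq_trans by blast
  moreover have "meq N (mmul N (mmul N L' A) L) L"
    using meq_mmul_left[OF assms(2), of L] mmul_one_left meq_trans by blast
  ultimately have "meq N L' L" by (metis mmul_assoc meq_trans)
  then show "meq N (mmul N L A) mone"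
    using meq_mmul_left assms(2) meq_sym meq_trans by blast
qed

lemma intertw:
  assumes RRi: "meq N (mmul N R Ri) mone" and RiR: "meq N (mmul N Ri R) mone"
    and PQ: "meq N (mmul N P Q) mone" and QP: "meq N (mmul N Q P) mone"
    and BBi: "meq N (mmul N B Bi) mone"
    and int: "meq N (mmul N R B) (mmul N B P)"
  shows "meq N (mmul N (mmul N (mpow_nat N R n) B) (mmul N (mpow_nat N Q n) Bi)) mone"
    and "meq N (mmul N (mmul N (mpow_nat N Ri n) B) (mmul N (mpow_nat N P n) Bi)) mone"
proof -
  have i1: "meq N (mmul N B Q) (mmul N Ri B)"
  proof -
    have "meq N (mmul N B Q) (mmul N (mmul N Ri R) (mmul N B Q))"
      using meq_mmul_left[OF RiR, of "mmul N B Q"] mmul_one_left meq_sym meq_trans by blast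
    also have "meq N \<dots> (mmul N Ri (mmul N (mmul N R B) Q))"
      by (simp add: mmul_assoc)
    also have "meq N \<dots> (mmul N Ri (mmul N B (mmul N P Q)))"
      using meq_mmul_right[OF meq_mmul_left[OF int, of Q], of Ri] unfolding mmul_assoc .
    also have "meq N \<dots> (mmul N Ri (mmul N B mone))"
      by (intro meq_mmul_right PQ)
    also have "meq N \<dots> (mmul N Ri B)"
      by (intro meq_mmul_right mmul_one_right)
    finally show ?thesis .
  qed
  have i2: "meq N (mmul N B P) (mmul N R B)" using int meq_sym by blast
  have i1n: "meq N (mmul N B (mpow_nat N Q n)) (mmul N (mpow_nat N Ri n) B)" for n
  proof (induction n)
    case 0 then show ?case by (simp add: mpow_0) (meson meq_sym meq_trans mmul_one_left mmul_one_right)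
  next
    case (Suc n)
    have "meq N (mmul N B (mpow_nat N Q (Suc n))) (mmul N (mmul N B Q) (mpow_nat N Q n))"
      by (simp add: mpow_Suc mmul_assoc)
    also have "meq N \<dots> (mmul N Ri (mmul N B (mpow_nat N Q n)))"
      using meq_mmul_left[OF i1, of "mpow_nat N Q n"] unfolding mmul_assoc .
    also have "meq N \<dots> (mmul N Ri (mmul N (mpow_nat N Ri n) B))"
      by (intro meq_mmul_right Suc)
    also have "meq N \<dots> (mmul N (mpow_nat N Ri (Suc n)) B)" by (simp add: mpow_Suc mmul_assoc)
    finally show ?case .
  qed
  have i2n: "meq N (mmul N B (mpow_nat N P n)) (mmul N (mpow_nat N R n) B)" for n
  proof (induction n)
    case 0 then show ?case by (simp add: mpow_0) (meson meq_sym meq_trans mmul_one_left mmul_one_right)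
  next
    case (Suc n)
    have "meq N (mmul N B (mpow_nat N P (Suc n))) (mmul N (mmul N B P) (mpow_nat N P n))"
      by (simp add: mpow_Suc mmul_assoc)
    also have "meq N \<dots> (mmul N R (mmul N B (mpow_nat N P n)))"
      using meq_mmul_left[OF i2, of "mpow_nat N P n"] unfolding mmul_assoc .
    also have "meq N \<dots> (mmul N R (mmul N (mpow_nat N R n) B))"
      by (intro meq_mmul_right Suc)
    also have "meq N \<dots> (mmul N (mpow_nat N R (Suc n)) B)" by (simp add: mpow_Suc mmul_assoc)
    finally show ?case .
  qed
  have pp: "meq N (mmul N (mpow_nat N X n) (mpow_nat N Y n)) mone"
    if XY: "meq N (mmul N X Y) mone" for X Y n
  proof (induction n)
    case 0 then show ?case by (simp add: mpow_0) (meson meq_sym meq_trans mmul_one_left mmul_one_right)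
  next
    case (Suc n)
    have "meq N (mmul N (mpow_nat N X (Suc n)) (mpow_nat N Y (Suc n)))
               (mmul N (mmul N X (mpow_nat N X n)) (mmul N (mpow_nat N Y n) Y))"
      unfolding mpow_Suc[of N X] by (intro meq_mmul_right mpow_Suc')
    also have "meq N \<dots> (mmul N X (mmul N (mmul N (mpow_nat N X n) (mpow_nat N Y n)) Y))"
      by (simp add: mmul_assoc)
    also have "meq N \<dots> (mmul N X (mmul N mone Y))"
      by (intro meq_mmul_right meq_mmul_left Suc)
    also have "meq N \<dots> (mmul N X Y)"
      by (intro meq_mmul_right mmul_one_left)
    also have "meq N \<dots> mone" by (rule XY)
    finally show ?case .
  qed
  have "meq N (mmul N (mmul N (mpow_nat N R n) B) (mmul N (mpow_nat N Q n) Bi))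
     (mmul N (mpow_nat N R n) (mmul N (mmul N B (mpow_nat N Q n)) Bi))" by (simp add: mmul_assoc)
  also have "meq N \<dots> (mmul N (mpow_nat N R n) (mmul N (mmul N (mpow_nat N Ri n) B) Bi))"
    by (intro meq_mmul_right meq_mmul_left i1n)
  also have "meq N \<dots> (mmul N (mmul N (mpow_nat N R n) (mpow_nat N Ri n)) (mmul N B Bi))" by (simp add: mmul_assoc)
  also have "meq N \<dots> (mmul N mone mone)" by (intro meq_mmul pp RRi BBi)
  also have "meq N \<dots> mone" by (rule mmul_one_left)
  finally show "meq N (mmul N (mmul N (mpow_nat N R n) B) (mmul N (mpow_nat N Q n) Bi)) mone" .
  have "meq N (mmul N (mmul N (mpow_nat N Ri n) B) (mmul N (mpow_nat N P n) Bi))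
     (mmul N (mpow_nat N Ri n) (mmul N (mmul N B (mpow_nat N P n)) Bi))" by (simp add: mmul_assoc)
  also have "meq N \<dots> (mmul N (mpow_nat N Ri n) (mmul N (mmul N (mpow_nat N R n) B) Bi))"
    by (intro meq_mmul_right meq_mmul_left i2n)
  also have "meq N \<dots> (mmul N (mmul N (mpow_nat N Ri n) (mpow_nat N R n)) (mmul N B Bi))" by (simp add: mmul_assoc)
  also have "meq N \<dots> (mmul N mone mone)" by (intro meq_mmul pp RiR BBi)
  also have "meq N \<dots> mone" by (rule mmul_one_left)
  finally show "meq N (mmul N (mmul N (mpow_nat N Ri n) B) (mmul N (mpow_nat N P n) Bi)) mone" .
qed

lemma final_abstract:
  assumes R: "meq N (mmul N R L) mone" "meq N (mmul N L R) mone"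
    and P: "meq N (mmul N P M) mone" "meq N (mmul N M P) mone"
    and B: "meq N (mmul N B K) mone" "meq N (mmul N K B) mone"
    and int: "meq N (mmul N R B) (mmul N B P)"
  shows "meq N (mmul N (mmul N (mpow N R s) B) (mmul N (mpow N P (- s)) (minv N B))) mone"
proof -
  note r = minv_ok[OF R] and p = minv_ok[OF P] and b = minv_ok[OF B]
  show ?thesis
  proof (cases "0 \<le> s")
    case True
    show ?thesis
    proof (cases "s = 0")
      case True
      then show ?thesis using intertw(1)[OF conjunct1[OF r] conjunct2[OF r] conjunct1[OF p] conjunct2[OF p] conjunct1[OF b] int, of 0]
        by (simp add: mpow_def mpow_0)
    next
      case False
      then show ?thesis using \<open>0 \<le> s\<close> intertw(1)[OF conjunct1[OF r] conjunct2[OF r] conjunct1[OF p] conjunct2[OF p] conjunct1[OF b] int, of "nat s"]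
        by (simp add: mpow_def)
    qed
  next
    case False
    then show ?thesis using intertw(2)[OF conjunct1[OF r] conjunct2[OF r] conjunct1[OF p] conjunct2[OF p] conjunct1[OF b] int, of "nat (- s)"]
      by (simp add: mpow_def)
  qed
qed


lemma sum_delta2: "finite A \<Longrightarrow> (\<Sum>k\<in>A. (if k = a \<and> P then f k else 0)) = (if a \<in> A \<and> P then f a else (0::'a::comm_monoid_add))"
  by (cases P) (simp_all add: sum.delta')

lemma Rmat_inv:
  fixes J :: "nat \<Rightarrow> 'a::ring_1"
  assumes N: "N \<ge> 1"
    and K1: "J N * rinv (J N) = 1" and K2: "rinv (J N) * J N = 1"
    and Z1: "J 0 * Z = 1" and Z2: "Z * J 0 = 1"
  defines "S \<equiv> (\<lambda>i j. (if j = i + 1 \<and> i < N then 1 else 0) - (if j = 1 then J i * Z else 0))"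
  shows "meq N (mmul N (Rmat N J) S) mone" "meq N (mmul N S (Rmat N J)) mone"
proof -
  let ?K = "rinv (J N)"
  have K2': "rinv (J N) * (J N * x) = x" for x by (simp add: mult.assoc[symmetric] K2)
  have K1': "J N * (rinv (J N) * x) = x" for x by (simp add: mult.assoc[symmetric] K1)
  have Z2': "Z * (J 0 * x) = x" for x by (simp add: mult.assoc[symmetric] Z2)
  have Z1': "J 0 * (Z * x) = x" for x by (simp add: mult.assoc[symmetric] Z1)
  show "meq N (mmul N (Rmat N J) S) mone"
    unfolding meq_def
  proof (intro ballI)
    fix i j assume i: "i \<in> {1..N}" and j: "j \<in> {1..N}"
    have pt: "Rmat N J i k * S k j = (if k = N \<and> True then - (J (i - 1) * ?K) * S N j else 0)
          + (if k = i - 1 \<and> (i \<ge> 2 \<and> i - 1 \<noteq> N) then S (i - 1) j else 0)" if "k \<in> {1..N}" for k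
      using that i by (auto simp: Rmat_def)
    have "mmul N (Rmat N J) S i j = - (J (i - 1) * ?K) * S N j + (if i \<ge> 2 then S (i - 1) j else 0)"
      unfolding mmul_def using i
      by (simp add: pt sum.distrib sum_delta2) auto
    also have "\<dots> = mone i j"
      using i j N K2 Z1 K2' Z1' by (auto simp: S_def mone_def mult.assoc algebra_simps)
    finally show "mmul N (Rmat N J) S i j = mone i j" .
  qed
  show "meq N (mmul N S (Rmat N J)) mone"
    unfolding meq_def
  proof (intro ballI)
    fix i j assume i: "i \<in> {1..N}" and j: "j \<in> {1..N}"
    have pt: "S i k * Rmat N J k j = (if k = i + 1 \<and> i < N then Rmat N J (i+1) j else 0)
          - (if k = 1 \<and> True then J i * Z * Rmat N J 1 j else 0)" if "k \<in> {1..N}" for k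
      using that i by (auto simp: S_def algebra_simps)
    have "mmul N S (Rmat N J) i j = (if i < N then Rmat N J (i+1) j else 0) - J i * Z * Rmat N J 1 j"
      unfolding mmul_def using i N
      by (simp add: pt sum_subtractf sum_delta2)
    also have "\<dots> = mone i j"
      using i j N K1 Z2 K1' Z2' by (auto simp: Rmat_def mone_def mult.assoc algebra_simps)
    finally show "mmul N S (Rmat N J) i j = mone i j" .
  qed
qed



lemma hankel_sum:
  fixes F :: "nat \<Rightarrow> nat \<Rightarrow> 'a::comm_monoid_add"
  assumes i: "i \<in> {1..N}" and j: "j \<in> {1..N}"
  shows "(\<Sum>k=1..N. (if i + k \<le> N+1 \<and> k + j \<ge> N+1 then F (N+1-i-k) (k+j-(N+1)) else 0))
       = (if i \<le> j then (\<Sum>m=0..j-i. F m (j-i-m)) else 0)"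
proof (cases "i \<le> j")
  case False
  then have "(if i + k \<le> N+1 \<and> k + j \<ge> N+1 then F (N+1-i-k) (k+j-(N+1)) else 0) = 0" for k
    by auto
  then show ?thesis using False by simp
next
  case True
  have "(\<Sum>k=1..N. (if i + k \<le> N+1 \<and> k + j \<ge> N+1 then F (N+1-i-k) (k+j-(N+1)) else 0))
      = (\<Sum>k\<in>{k\<in>{1..N}. i + k \<le> N+1 \<and> k + j \<ge> N+1}. F (N+1-i-k) (k+j-(N+1)))"
    by (rule sum.inter_filter[symmetric]) simp
  also have "{k\<in>{1..N}. i + k \<le> N+1 \<and> k + j \<ge> N+1} = {N+1-j..N+1-i}"
    using i j True by auto
  also have "(\<Sum>k\<in>{N+1-j..N+1-i}. F (N+1-i-k) (k+j-(N+1))) = (\<Sum>m=0..j-i. F m (j-i-m))"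
    by (rule sum.reindex_bij_witness[where i="\<lambda>m. N+1-i-m" and j="\<lambda>k. N+1-i-k"])
       (use i j True in \<open>auto simp: add.commute\<close>)
  finally show ?thesis using True by simp
qed

function rseq :: "(nat \<Rightarrow> 'a::ring_1) \<Rightarrow> 'a \<Rightarrow> nat \<Rightarrow> 'a" where
  "rseq a z n = (if n = 0 then z else - (z * (\<Sum>m\<in>{1..n}. a m * rseq a z (n - m))))"
  by auto
termination by (relation "Wellfounded.measure (\<lambda>(a,z,n). n)") auto

function lseq :: "(nat \<Rightarrow> 'a::ring_1) \<Rightarrow> 'a \<Rightarrow> nat \<Rightarrow> 'a" where
  "lseq a z n = (if n = 0 then z else - ((\<Sum>m\<in>{1..n}. lseq a z (n - m) * a m) * z))"
  by auto
termination by (relation "Wellfounded.measure (\<lambda>(a,z,n). n)") auto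

declare rseq.simps[simp del] lseq.simps[simp del]

lemma rseq_conv:
  assumes "a 0 * z = 1"
  shows "(\<Sum>m=0..n. a m * rseq a z (n - m)) = (if n = 0 then 1 else 0)"
proof (cases n)
  case 0 then show ?thesis using assms by (simp add: rseq.simps)
next
  case (Suc p)
  have "(\<Sum>m=0..n. a m * rseq a z (n - m)) = a 0 * rseq a z n + (\<Sum>m=1..n. a m * rseq a z (n - m))"
    by (simp add: sum.atLeast_Suc_atMost)
  also have "a 0 * rseq a z n = - (a 0 * z * (\<Sum>m=1..n. a m * rseq a z (n - m)))"
    using Suc by (subst rseq.simps) (simp add: mult.assoc)
  finally show ?thesis using assms Suc by simp
qed

lemma lseq_conv:
  assumes "z * a 0 = 1"
  shows "(\<Sum>m=0..n. lseq a z (n - m) * a m) = (if n = 0 then 1 else 0)"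
proof (cases n)
  case 0 then show ?thesis using assms by (simp add: lseq.simps)
next
  case (Suc p)
  have "(\<Sum>m=0..n. lseq a z (n - m) * a m) = lseq a z n * a 0 + (\<Sum>m=1..n. lseq a z (n - m) * a m)"
    by (simp add: sum.atLeast_Suc_atMost)
  also have "lseq a z n * a 0 = - ((\<Sum>m=1..n. lseq a z (n - m) * a m) * (z * a 0))"
    using Suc by (subst lseq.simps) (simp add: mult.assoc)
  finally show ?thesis using assms Suc by simp
qed

lemma B0_inv:
  fixes J :: "nat \<Rightarrow> 'a::ring_1"
  assumes K1: "J N * K = 1" and K2: "K * J N = 1"
  shows "\<exists>X. meq N (mmul N (B0 N J) X) mone" "\<exists>Y. meq N (mmul N Y (B0 N J)) mone"
proof -
  define a where "a = (\<lambda>m. - J (N - m))"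
  have a0r: "a 0 * (- K) = 1" using K1 by (simp add: a_def)
  have a0l: "(- K) * a 0 = 1" using K2 by (simp add: a_def)
  define X where "X = (\<lambda>k j. if k + j \<ge> N+1 then rseq a (- K) (k+j-(N+1)) else 0)"
  define Y where "Y = (\<lambda>i k. if i + k \<ge> N+1 then lseq a (- K) (i+k-(N+1)) else 0)"
  have "meq N (mmul N (B0 N J) X) mone"
    unfolding meq_def
  proof (intro ballI)
    fix i j assume i: "i \<in> {1..N}" and j: "j \<in> {1..N}"
    have pt: "B0 N J i k * X k j = (if i + k \<le> N+1 \<and> k + j \<ge> N+1 then a (N+1-i-k) * rseq a (- K) (k+j-(N+1)) else 0)"
      if "k \<in> {1..N}" for k
      using that i by (auto simp: B0_def X_def a_def)
    have "mmul N (B0 N J) X i j = (if i \<le> j then (\<Sum>m=0..j-i. a m * rseq a (- K) (j-i-m)) else 0)"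
      unfolding mmul_def using hankel_sum[OF i j, of "\<lambda>m n. a m * rseq a (- K) n"]
      by (simp add: pt)
    also have "\<dots> = mone i j"
      using rseq_conv[of a "- K", OF a0r, of "j - i"] by (auto simp: mone_def)
    finally show "mmul N (B0 N J) X i j = mone i j" .
  qed
  then show "\<exists>X. meq N (mmul N (B0 N J) X) mone" by blast
  have "meq N (mmul N Y (B0 N J)) mone"
    unfolding meq_def
  proof (intro ballI)
    fix i j assume i: "i \<in> {1..N}" and j: "j \<in> {1..N}"
    have pt: "Y i k * B0 N J k j = (if j + k \<le> N+1 \<and> k + i \<ge> N+1 then lseq a (- K) (k+i-(N+1)) * a (N+1-j-k) else 0)"
      if "k \<in> {1..N}" for k
      using that j by (auto simp: B0_def Y_def a_def add.commute)
    have "mmul N Y (B0 N J) i j = (if j \<le> i then (\<Sum>m=0..i-j. lseq a (- K) (i-j-m) * a m) else 0)"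
      unfolding mmul_def using hankel_sum[OF j i, of "\<lambda>m n. lseq a (- K) n * a m"]
      by (simp add: pt)
    also have "\<dots> = mone i j"
      using lseq_conv[of "- K" a, OF a0l, of "i - j"] by (auto simp: mone_def)
    finally show "mmul N Y (B0 N J) i j = mone i j" .
  qed
  then show "\<exists>Y. meq N (mmul N Y (B0 N J)) mone" by blast
qed



locale psa =
  fixes D :: "'a::real_algebra_1" and mop :: "(real \<Rightarrow> real) \<Rightarrow> 'a" and adj :: "'a \<Rightarrow> 'a"
  assumes alg: "psido_algebra D mop adj"
begin

lemma Dinv: "\<exists>Di. D * Di = 1 \<and> Di * D = 1" using alg unfolding psido_algebra_def by blast
lemma mop_add: "smooth f \<Longrightarrow> smooth g \<Longrightarrow> mop (\<lambda>x. f x + g x) = mop f + mop g"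
  using alg unfolding psido_algebra_def by blast
lemma mop_mult: "smooth f \<Longrightarrow> smooth g \<Longrightarrow> mop (\<lambda>x. f x * g x) = mop f * mop g"
  using alg unfolding psido_algebra_def by blast
lemma mop_const: "mop (\<lambda>x. c) = of_real c"
  using alg unfolding psido_algebra_def by blast
lemma leib: "smooth f \<Longrightarrow> D * mop f = mop f * D + mop (deriv f)"
  using alg unfolding psido_algebra_def by blast
lemma adj_add: "adj (a + b) = adj a + adj b"
  using alg unfolding psido_algebra_def by blast
lemma adj_scaleR: "adj (c *\<^sub>R a) = c *\<^sub>R adj a"
  using alg unfolding psido_algebra_def by blast
lemma adj_mult: "adj (a * b) = adj b * adj a"
  using alg unfolding psido_algebra_def by blast
lemma adj_one: "adj 1 = 1"
  using alg unfolding psido_algebra_def by blast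
lemma adj_D: "adj D = - D"
  using alg unfolding psido_algebra_def by blast
lemma adj_mop: "smooth f \<Longrightarrow> adj (mop f) = mop f"
  using alg unfolding psido_algebra_def by blast

lemma adj_zero: "adj 0 = 0"
  using adj_scaleR[of 0 0] by simp
lemma adj_neg: "adj (- a) = - adj a"
  using adj_scaleR[of "-1" a] by simp
lemma adj_sum: "adj (\<Sum>k\<in>A. f k) = (\<Sum>k\<in>A. adj (f k))"
  by (induction A rule: infinite_finite_induct) (simp_all add: adj_zero adj_add)

lemma Jop_skew:
  assumes "smooth (u i)"
  shows "adj (Jop D mop eps u i) = - Jop D mop eps u i"
proof -
  have d3: "adj (D ^ 3) = - (D ^ 3)"
    by (simp add: power3_eq_cube adj_mult adj_D mult.assoc)
  show ?thesis
    by (simp add: Jop_def adj_add adj_scaleR adj_mult adj_D adj_mop[OF assms] d3 algebra_simps)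
qed

lemma JN_inv:
  assumes v: "smooth v" and pos: "\<forall>x. v x > 0"
  shows "invertible_el ((1/2) *\<^sub>R (mop v * D + D * mop v))"
proof -
  define s where "s = (\<lambda>x. sqrt (v x))"
  define t where "t = (\<lambda>x. 1 / sqrt (v x))"
  have s_eq: "s = (\<lambda>x. v x / sqrt (v x) ^ 1)"
    unfolding s_def using pos by (auto intro!: ext simp: real_div_sqrt less_imp_le)
  have t_eq: "t = (\<lambda>x. (\<lambda>x. 1) x / sqrt (v x) ^ 1)" unfolding t_def by simp
  have ss: "smooth s" unfolding s_eq by (rule smooth_sqrt_class[OF v pos v])
  have ts: "smooth t" unfolding t_eq by (rule smooth_sqrt_class[OF v pos smooth_const])
  have sv: "mop s * mop s = mop v"
  proof -
    have "(\<lambda>x. s x * s x) = v" unfolding s_def using pos by (auto intro!: ext simp: less_imp_le)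
    then show ?thesis using mop_mult[OF ss ss] by simp
  qed
  have st: "mop s * mop t = 1" "mop t * mop s = 1"
  proof -
    have "(\<lambda>x. s x * t x) = (\<lambda>x. 1)" "(\<lambda>x. t x * s x) = (\<lambda>x. 1)"
      unfolding s_def t_def using pos by (auto intro!: ext simp: less_imp_le) (metis less_irrefl)+
    then show "mop s * mop t = 1" "mop t * mop s = 1"
      using mop_mult[OF ss ts] mop_mult[OF ts ss] mop_const[of 1] by simp_all
  qed
  have ds: "deriv s = (\<lambda>x. deriv v x / (2 * sqrt (v x)))"
  proof
    fix x
    have "DERIV s x :> inverse (sqrt (v x)) / 2 * deriv v x"
      unfolding s_def using DERIV_chain2[OF DERIV_real_sqrt smooth_DERIV[OF v]] pos by blast
    then show "deriv s x = deriv v x / (2 * sqrt (v x))"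
      using DERIV_imp_deriv by (fastforce simp: field_simps)
  qed
  have ssd: "mop s * mop (deriv s) = (1/2) *\<^sub>R mop (deriv v)"
  proof -
    have "(\<lambda>x. s x * deriv s x) = (\<lambda>x. (\<lambda>x. 1/2) x * deriv v x)"
      unfolding ds using pos by (auto intro!: ext simp: s_def field_simps less_imp_le) (metis less_irrefl)
    then have "mop s * mop (deriv s) = mop (\<lambda>x. (\<lambda>x. 1/2) x * deriv v x)"
      using mop_mult[OF ss smooth_deriv[OF ss]] by metis
    also have "\<dots> = mop (\<lambda>x. 1/2) * mop (deriv v)"
      by (rule mop_mult[OF smooth_const smooth_deriv[OF v]])
    finally have "mop s * mop (deriv s) = mop (\<lambda>x. 1/2) * mop (deriv v)" .
    then show ?thesis by (simp add: mop_const of_real_def)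
  qed
  have J: "(1/2) *\<^sub>R (mop v * D + D * mop v) = mop s * D * mop s"
  proof -
    have "mop s * D * mop s = mop s * (D * mop s)" by (simp add: mult.assoc)
    also have "\<dots> = mop v * D + (1/2) *\<^sub>R mop (deriv v)"
      by (simp add: leib[OF ss] distrib_left mult.assoc[symmetric] sv ssd)
    moreover have h: "(1/2) *\<^sub>R x + (1/2) *\<^sub>R x = x" for x :: 'a
      by (simp add: scaleR_add_left[symmetric])
    ultimately show ?thesis
      by (simp add: leib[OF v] scaleR_add_right algebra_simps h)
  qed
  obtain Di where Di: "D * Di = 1" "Di * D = 1" using Dinv by blast
  have "(mop s * D * mop s) * (mop t * Di * mop t) = 1"
  proof -
    have "(mop s * D * mop s) * (mop t * Di * mop t) = mop s * D * (mop s * mop t) * Di * mop t"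
      by (simp add: mult.assoc)
    also have "\<dots> = mop s * mop t" by (simp add: st Di mult.assoc)
    finally show ?thesis using st by simp
  qed
  moreover have "(mop t * Di * mop t) * (mop s * D * mop s) = 1"
  proof -
    have "(mop t * Di * mop t) * (mop s * D * mop s) = mop t * Di * (mop t * mop s) * D * mop s"
      by (simp add: mult.assoc)
    also have "\<dots> = mop t * mop s" by (simp add: st Di mult.assoc)
    finally show ?thesis using st by simp
  qed
  ultimately show ?thesis unfolding invertible_el_def J by blast
qed


lemma madj_mmul: "madj adj (mmul N A B) = mmul N (madj adj B) (madj adj A)"
  unfolding madj_def mmul_def by (simp add: adj_sum adj_mult)

lemma meq_madj: "meq N A B \<Longrightarrow> meq N (madj adj A) (madj adj B)"
  unfolding meq_def madj_def by simp

lemma madj_mone: "madj adj mone = mone"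
  unfolding madj_def mone_def by (auto intro!: ext simp: adj_one adj_zero)

lemma madj_inv:
  assumes "meq N (mmul N A L) mone" "meq N (mmul N L A) mone"
  shows "meq N (mmul N (madj adj A) (madj adj L)) mone" "meq N (mmul N (madj adj L) (madj adj A)) mone"
  using meq_madj[OF assms(2)] meq_madj[OF assms(1)] by (simp_all add: madj_mmul madj_mone)

lemma intertw_RB:
  fixes J :: "nat \<Rightarrow> 'a"
  assumes N: "N \<ge> 1" and skew: "\<forall>i\<le>N. adj (J i) = - J i" and K: "rinv (J N) * J N = 1"
  shows "meq N (mmul N (Rmat N J) (B0 N J)) (mmul N (B0 N J) (madj adj (Rmat N J)))"
proof -
  let ?K = "rinv (J N)"
  define M where "M = (\<lambda>i j. if i = 1 \<and> j = 1 then J 0 else if i \<ge> 2 \<and> j \<ge> 2 \<and> i + j - 2 \<le> N then - J (i + j - 2) else 0)"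
  have K': "J x * (rinv (J N) * J N) = J x" for x by (simp add: K)
  have c1: "mmul N (Rmat N J) (B0 N J) i j = M i j" if i: "i \<in> {1..N}" and j: "j \<in> {1..N}" for i j
  proof -
    have pt: "Rmat N J i k * B0 N J k j = (if k = N \<and> True then - (J (i - 1) * ?K) * B0 N J N j else 0)
          + (if k = i - 1 \<and> (i \<ge> 2 \<and> i - 1 \<noteq> N) then B0 N J (i - 1) j else 0)" if "k \<in> {1..N}" for k
      using that i by (auto simp: Rmat_def)
    have "mmul N (Rmat N J) (B0 N J) i j = - (J (i - 1) * ?K) * B0 N J N j + (if i \<ge> 2 then B0 N J (i - 1) j else 0)"
      unfolding mmul_def using i
      by (simp add: pt sum.distrib sum_delta2) auto
    also have "\<dots> = M i j"
      using i j N K' by (cases "j = 1") (auto simp: B0_def M_def mult.assoc numeral_2_eq_2)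
    finally show ?thesis .
  qed
  have c2: "mmul N (B0 N J) (madj adj (Rmat N J)) i j = - adj (mmul N (Rmat N J) (B0 N J) j i)"
    if i: "i \<in> {1..N}" and j: "j \<in> {1..N}" for i j
  proof -
    have "adj (B0 N J k i) = - B0 N J i k" if "k \<in> {1..N}" for k
      using that i skew by (auto simp: B0_def adj_neg adj_zero add.commute)
    then show ?thesis
      unfolding mmul_def madj_def
      by (simp add: adj_sum adj_mult sum_negf[symmetric])
  qed
  have c3: "- adj (M j i) = M i j" if i: "i \<in> {1..N}" and j: "j \<in> {1..N}" for i j
    using skew N by (auto simp: M_def adj_neg adj_zero add.commute)
  show ?thesis unfolding meq_def using c1 c2 c3 by simp
qed

end

theorem mainTheorem1:
  fixes D :: "'a::real_algebra_1"
    and mop :: "(real \<Rightarrow> real) \<Rightarrow> 'a"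
    and adj :: "'a \<Rightarrow> 'a"
    and N :: nat
    and eps :: "nat \<Rightarrow> real"
    and u :: "nat \<Rightarrow> real \<Rightarrow> real"
  assumes alg: "psido_algebra D mop adj"
    and N: "N \<ge> 1"
    and epsN: "eps N = 0"
    and smooth: "\<forall>i\<le>N. smooth (u i)"
    and uN_pos: "\<forall>x. u N x > 0"
    and J0_inv: "invertible_el (Jop D mop eps u 0)"
  shows "\<forall>s::int. meq N (mmul N (Bs N (Jop D mop eps u) s)
                                (Omegas N adj (Jop D mop eps u) (- s))) mone"
proof
  fix s :: int
  interpret psa D mop adj using alg by unfold_locales
  define J where "J = Jop D mop eps u"
  have skew: "\<forall>i\<le>N. adj (J i) = - J i"
    using smooth Jop_skew unfolding J_def by blast
  have JN: "J N = (1/2) *\<^sub>R (mop (u N) * D + D * mop (u N))"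
    by (simp add: J_def Jop_def epsN)
  have "invertible_el (J N)" unfolding JN
    by (rule JN_inv) (use smooth uN_pos in auto)
  then have K: "J N * rinv (J N) = 1 \<and> rinv (J N) * J N = 1"
    unfolding invertible_el_def rinv_def by (rule someI_ex)
  obtain Z where Z: "J 0 * Z = 1" "Z * J 0 = 1"
    using J0_inv unfolding invertible_el_def J_def by blast
  note RS = Rmat_inv[OF N conjunct1[OF K] conjunct2[OF K] Z]
  note PS = madj_inv[OF RS]
  obtain X where X: "meq N (mmul N (B0 N J) X) mone" using B0_inv[of J N "rinv (J N)", OF conjunct1[OF K] conjunct2[OF K]] by blast
  obtain Y where Y: "meq N (mmul N Y (B0 N J)) mone" using B0_inv[of J N "rinv (J N)", OF conjunct1[OF K] conjunct2[OF K]] by blast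
  note BB = minv_ok2[OF X Y]
  have int: "meq N (mmul N (Rmat N J) (B0 N J)) (mmul N (B0 N J) (madj adj (Rmat N J)))"
    by (rule intertw_RB[OF N skew conjunct2[OF K]])
  have "meq N (mmul N (mmul N (mpow N (Rmat N J) s) (B0 N J))
      (mmul N (mpow N (madj adj (Rmat N J)) (- s)) (minv N (B0 N J)))) mone"
    by (rule final_abstract[OF RS PS conjunct1[OF BB] conjunct2[OF BB] int])
  then show "meq N (mmul N (Bs N (Jop D mop eps u) s) (Omegas N adj (Jop D mop eps u) (- s))) mone"
    unfolding Bs_def Omegas_def J_def .
qed

end
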